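(* For any integer $d\ge2$, any $\Gamma\in\mathcal{L}_d$ and any $Q\in\mathcal{R}_d$ we have $|\Gamma_0|\le 2d-2$, $|\Gamma_1|\le 3d-3$, $|Q_0|\le5(d-1)$ and $|Q_1|\le 6(d-1)$. In particular $\mathcal{L}_d$ and $\mathcal{R}_d$ are finite.
   Context: For an undirected multigraph $\Gamma$ (vertex set $\Gamma_0$, edge set $\Gamma_1$), $\chi(\Gamma)=|\Gamma_1|-|\Gamma_0|+(\text{number of connected components})$. A connected graph with at least one edge is prime if it is not the union of two full proper subgraphs having exactly one common vertex. $\mathcal{L}_d$ is the set of prime graphs $\Gamma$ with $\chi(\Gamma)=d$ in which every vertex has valency at least $3$. $\mathcal{R}_d$ is the set of quivers with no oriented cycles obtained from some $\Gamma\in\mathcal{L}_d$ by orienting some of the edges and putting a sink on each remaining edge (replacing it by a path of length two whose two arrows point towards the new middle vertex). *)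

theory Defs
  imports Main
begin

text \<open>An undirected multigraph: a vertex set, an edge set, and for each edge its
  two end points (listed in an arbitrary order, which carries no meaning; loops
  and multiple edges are allowed).\<close>

record ('v, 'e) mgraph =
  verts :: "'v set"
  edges :: "'e set"
  ends  :: "'e \<Rightarrow> 'v \<times> 'v"

definition wf_mgraph :: "('v, 'e) mgraph \<Rightarrow> bool" where
  "wf_mgraph G \<longleftrightarrow> finite (verts G) \<and> finite (edges G) \<and>
     (\<forall>e\<in>edges G. fst (ends G e) \<in> verts G \<and> snd (ends G e) \<in> verts G)"

definition adj :: "('v, 'e) mgraph \<Rightarrow> ('v \<times> 'v) set" where
  "adj G = (\<lambda>e. ends G e) ` edges G \<union> ((\<lambda>e. prod.swap (ends G e)) ` edges G)"

definition conn_rel :: "('v, 'e) mgraph \<Rightarrow> ('v \<times> 'v) set" where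
  "conn_rel G = Id_on (verts G) \<union> (adj G)\<^sup>+"

definition num_components :: "('v, 'e) mgraph \<Rightarrow> nat" where
  "num_components G = card (verts G // conn_rel G)"

definition chi :: "('v, 'e) mgraph \<Rightarrow> int" where
  "chi G = int (card (edges G)) - int (card (verts G)) + int (num_components G)"

text \<open>Valency (degree); a loop counts twice.\<close>
definition valency :: "('v, 'e) mgraph \<Rightarrow> 'v \<Rightarrow> nat" where
  "valency G v = card {e \<in> edges G. fst (ends G e) = v} + card {e \<in> edges G. snd (ends G e) = v}"

definition connected_mg :: "('v, 'e) mgraph \<Rightarrow> bool" where
  "connected_mg G \<longleftrightarrow> verts G \<noteq> {} \<and> (\<forall>u\<in>verts G. \<forall>w\<in>verts G. (u, w) \<in> conn_rel G)"

text \<open>\<open>G\<close> is the union of the two full (induced) proper subgraphs on the vertex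
  sets \<open>A\<close> and \<open>B\<close>, which have exactly one common vertex.\<close>
definition one_point_union :: "('v, 'e) mgraph \<Rightarrow> 'v set \<Rightarrow> 'v set \<Rightarrow> bool" where
  "one_point_union G A B \<longleftrightarrow>
     A \<subseteq> verts G \<and> B \<subseteq> verts G \<and> A \<union> B = verts G \<and> A \<noteq> verts G \<and> B \<noteq> verts G \<and>
     (\<exists>v. A \<inter> B = {v}) \<and>
     (\<forall>e\<in>edges G. (fst (ends G e) \<in> A \<and> snd (ends G e) \<in> A) \<or>
                   (fst (ends G e) \<in> B \<and> snd (ends G e) \<in> B))"

definition prime_mg :: "('v, 'e) mgraph \<Rightarrow> bool" where
  "prime_mg G \<longleftrightarrow> connected_mg G \<and> edges G \<noteq> {} \<and> \<not> (\<exists>A B. one_point_union G A B)"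

definition in_L :: "int \<Rightarrow> ('v, 'e) mgraph \<Rightarrow> bool" where
  "in_L d G \<longleftrightarrow> wf_mgraph G \<and> prime_mg G \<and> chi G = d \<and> (\<forall>v\<in>verts G. valency G v \<ge> 3)"

definition mg_iso :: "('v, 'e) mgraph \<Rightarrow> ('w, 'f) mgraph \<Rightarrow> bool" where
  "mg_iso G H \<longleftrightarrow> (\<exists>f g. bij_betw f (verts G) (verts H) \<and> bij_betw g (edges G) (edges H) \<and>
     (\<forall>e\<in>edges G. ends H (g e) = map_prod f f (ends G e) \<or>
                   ends H (g e) = prod.swap (map_prod f f (ends G e))))"

record ('q, 'a) quiver =
  qverts :: "'q set"
  arrows :: "'a set"
  qsrc   :: "'a \<Rightarrow> 'q"
  qtgt   :: "'a \<Rightarrow> 'q"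

definition arrow_rel :: "('q, 'a) quiver \<Rightarrow> ('q \<times> 'q) set" where
  "arrow_rel Q = (\<lambda>a. (qsrc Q a, qtgt Q a)) ` arrows Q"

definition no_oriented_cycles :: "('q, 'a) quiver \<Rightarrow> bool" where
  "no_oriented_cycles Q \<longleftrightarrow> acyclic (arrow_rel Q)"

definition quiver_iso :: "('q, 'a) quiver \<Rightarrow> ('r, 'b) quiver \<Rightarrow> bool" where
  "quiver_iso Q P \<longleftrightarrow> (\<exists>f g. bij_betw f (qverts Q) (qverts P) \<and> bij_betw g (arrows Q) (arrows P) \<and>
     (\<forall>a\<in>arrows Q. qsrc P (g a) = f (qsrc Q a) \<and> qtgt P (g a) = f (qtgt Q a)))"

text \<open>The quiver obtained from \<open>G\<close> by orienting the edges in \<open>Or\<close> (edge \<open>e\<close> points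
  from \<open>fst (ends G e)\<close> to \<open>snd (ends G e)\<close> if \<open>dir e\<close>, otherwise the other way) and
  putting a sink on every remaining edge \<open>e\<close>: a new vertex \<open>Inr e\<close> with the two
  arrows \<open>(e, True)\<close> and \<open>(e, False)\<close> pointing from the two ends of \<open>e\<close> to it.\<close>
definition sink_quiver :: "('v, 'e) mgraph \<Rightarrow> 'e set \<Rightarrow> ('e \<Rightarrow> bool) \<Rightarrow> ('v + 'e, 'e \<times> bool) quiver" where
  "sink_quiver G Or dir =
     \<lparr> qverts = Inl ` verts G \<union> Inr ` (edges G - Or),
       arrows = (\<lambda>e. (e, True)) ` edges G \<union> (\<lambda>e. (e, False)) ` (edges G - Or),
       qsrc = (\<lambda>(e, b). if e \<in> Or then Inl (if dir e then fst (ends G e) else snd (ends G e))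
                        else Inl (if b then fst (ends G e) else snd (ends G e))),
       qtgt = (\<lambda>(e, b). if e \<in> Or then Inl (if dir e then snd (ends G e) else fst (ends G e))
                        else Inr e) \<rparr>"

text \<open>\<open>Q\<close> is obtained (literally) from some graph of \<open>\<L>_d\<close>; membership in \<open>\<R>_d\<close>
  means being isomorphic to such a quiver.\<close>
definition R_construction :: "int \<Rightarrow> ('v, 'e) mgraph \<Rightarrow> 'e set \<Rightarrow> ('e \<Rightarrow> bool) \<Rightarrow> bool" where
  "R_construction d G Or dir \<longleftrightarrow> in_L d G \<and> Or \<subseteq> edges G \<and> no_oriented_cycles (sink_quiver G Or dir)"

end

theory Submission imports Defs "HOL-Library.FuncSet" begin

lemma count_fib:
  assumes "finite E" "finite V" "\<forall>e\<in>E. h e \<in> V"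
  shows "(\<Sum>v\<in>V. card {e\<in>E. h e = v}) = card E"
proof -
  have "(\<Sum>v\<in>V. \<Sum>e\<in>{e\<in>E. h e = v}. (1::nat)) = (\<Sum>e\<in>E. 1)"
    by (rule sum.group) (use assms in auto)
  thus ?thesis by simp
qed

lemma ncomp1:
  assumes "wf_mgraph G" "connected_mg G"
  shows "num_components G = 1"
proof -
  have A: "adj G \<subseteq> verts G \<times> verts G" using assms(1) unfolding adj_def wf_mgraph_def by (auto simp: prod.swap_def) (metis fst_conv snd_conv)+
  have "(adj G)\<^sup>+ \<subseteq> verts G \<times> verts G" using A trancl_subset_Sigma by blast
  hence C: "conn_rel G \<subseteq> verts G \<times> verts G" unfolding conn_rel_def by auto
  have "\<forall>x\<in>verts G. conn_rel G `` {x} = verts G"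
    using C assms(2) unfolding connected_mg_def by blast
  hence "verts G // conn_rel G = {verts G}" using assms(2) unfolding quotient_def connected_mg_def
    by auto
  thus ?thesis unfolding num_components_def by simp
qed

lemma L_bounds:
  assumes "in_L d G"
  shows "int (card (verts G)) \<le> 2 * d - 2 \<and> int (card (edges G)) \<le> 3 * d - 3"
proof -
  have wf: "wf_mgraph G" and pr: "prime_mg G" and ch: "chi G = d" and val: "\<forall>v\<in>verts G. valency G v \<ge> 3"
    using assms unfolding in_L_def by auto
  have fV: "finite (verts G)" and fE: "finite (edges G)" and en: "\<forall>e\<in>edges G. fst (ends G e) \<in> verts G \<and> snd (ends G e) \<in> verts G"
    using wf unfolding wf_mgraph_def by auto
  have "num_components G = 1" using ncomp1 wf pr unfolding prime_mg_def by blast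
  hence d: "d = int (card (edges G)) - int (card (verts G)) + 1" using ch unfolding chi_def by simp
  have "(\<Sum>v\<in>verts G. valency G v) = card (edges G) + card (edges G)"
    unfolding valency_def sum.distrib
    using count_fib[OF fE fV, of "\<lambda>e. fst (ends G e)"] count_fib[OF fE fV, of "\<lambda>e. snd (ends G e)"] en
    by auto
  moreover have "(\<Sum>v\<in>verts G. 3) \<le> (\<Sum>v\<in>verts G. valency G v)" by (rule sum_mono) (use val in auto)
  ultimately have "3 * card (verts G) \<le> 2 * card (edges G)" by simp
  thus ?thesis using d by linarith
qed


lemma ar1: "(a::int) \<le> b + c \<Longrightarrow> b \<le> 2*d-2 \<Longrightarrow> c \<le> 3*d-3 \<Longrightarrow> a \<le> 5*(d-1)" by (simp add: algebra_simps)
lemma ar2: "(a::int) \<le> c + c \<Longrightarrow> c \<le> 3*d-3 \<Longrightarrow> a \<le> 6*(d-1)" by (simp add: algebra_simps)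

lemma R_bounds:
  fixes G :: "('v, 'e) mgraph"
  assumes "R_construction d G Or dir"
  shows "int (card (qverts (sink_quiver G Or dir))) \<le> 5 * (d - 1) \<and>
            int (card (arrows (sink_quiver G Or dir))) \<le> 6 * (d - 1)"
proof -
  have L: "in_L d G" using assms unfolding R_construction_def by auto
  note b = L_bounds[OF L]
  have "card (qverts (sink_quiver G Or dir)) \<le> card (Inl ` verts G :: ('v+'e) set) + card (Inr ` (edges G - Or) :: ('v+'e) set)"
    unfolding sink_quiver_def by (simp add: card_Un_le)
  also have "\<dots> \<le> card (verts G) + card (edges G)"
    using L unfolding in_L_def wf_mgraph_def
    by (intro add_mono card_image_le order.trans[OF card_image_le]) (auto intro: card_mono)
  finally have 1: "card (qverts (sink_quiver G Or dir)) \<le> card (verts G) + card (edges G)" .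
  have "card (arrows (sink_quiver G Or dir)) \<le> card ((\<lambda>e. (e, True)) ` edges G) + card ((\<lambda>e. (e, False)) ` (edges G - Or))"
    unfolding sink_quiver_def by (simp add: card_Un_le)
  also have "\<dots> \<le> card (edges G) + card (edges G)"
    using L unfolding in_L_def wf_mgraph_def
    by (intro add_mono card_image_le order.trans[OF card_image_le]) (auto intro: card_mono)
  finally have 2: "card (arrows (sink_quiver G Or dir)) \<le> card (edges G) + card (edges G)" .
  have i1: "int (card (qverts (sink_quiver G Or dir))) \<le> int (card (verts G)) + int (card (edges G))" using 1 by linarith
  have i2: "int (card (arrows (sink_quiver G Or dir))) \<le> int (card (edges G)) + int (card (edges G))" using 2 by linarith
  have "int (card (qverts (sink_quiver G Or dir))) \<le> 5 * (d - 1)" by (rule ar1[OF i1 b[THEN conjunct1] b[THEN conjunct2]])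
  moreover have "int (card (arrows (sink_quiver G Or dir))) \<le> 6 * (d - 1)" by (rule ar2[OF i2 b[THEN conjunct2]])
  ultimately show ?thesis by blast
qed

definition FG :: "nat \<Rightarrow> nat \<Rightarrow> (nat, nat) mgraph set" where
  "FG N M = (\<lambda>(V, E, f). \<lparr>verts = V, edges = E, ends = f\<rparr>) `
     (Pow {..<N} \<times> Sigma (Pow {..<M}) (\<lambda>E. PiE E (\<lambda>_. {..<N} \<times> {..<N})))"

lemma FG_finite: "finite (FG N M)"
  unfolding FG_def by (intro finite_imageI finite_cartesian_product finite_SigmaI finite_PiE) (auto intro: finite_subset)

lemma FG_iso:
  assumes "wf_mgraph G" "card (verts G) \<le> N" "card (edges G) \<le> M"
  shows "\<exists>H\<in>FG N M. mg_iso G H"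
proof -
  have fV: "finite (verts G)" and fE: "finite (edges G)" and en: "\<forall>e\<in>edges G. fst (ends G e) \<in> verts G \<and> snd (ends G e) \<in> verts G"
    using assms(1) unfolding wf_mgraph_def by auto
  obtain f where f: "bij_betw f (verts G) {0..<card (verts G)}" using ex_bij_betw_finite_nat[OF fV] by blast
  obtain g where g: "bij_betw g (edges G) {0..<card (edges G)}" using ex_bij_betw_finite_nat[OF fE] by blast
  define h where "h = restrict (\<lambda>k. map_prod f f (ends G (inv_into (edges G) g k))) {0..<card (edges G)}"
  define H where "H = \<lparr>verts = {0..<card (verts G)}, edges = {0..<card (edges G)}, ends = h\<rparr>"
  have "h \<in> PiE {0..<card (edges G)} (\<lambda>_. {..<N} \<times> {..<N})"
  proof -
    have "map_prod f f (ends G (inv_into (edges G) g k)) \<in> {..<N} \<times> {..<N}" if "k < card (edges G)" for k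
    proof -
      have "inv_into (edges G) g k \<in> edges G" using g that
        by (metis atLeastLessThan_iff bij_betw_def inv_into_into zero_le)
      hence "fst (ends G (inv_into (edges G) g k)) \<in> verts G" "snd (ends G (inv_into (edges G) g k)) \<in> verts G" using en by auto
      hence "f (fst (ends G (inv_into (edges G) g k))) < card (verts G)" "f (snd (ends G (inv_into (edges G) g k))) < card (verts G)"
        using f bij_betwE by fastforce+
      thus ?thesis using assms(2) by (auto simp: map_prod_def split: prod.splits)
    qed
    thus ?thesis unfolding h_def by auto
  qed
  hence "H \<in> FG N M" unfolding FG_def H_def using assms(2,3)
    by (intro image_eqI[where x="({0..<card (verts G)}, {0..<card (edges G)}, h)"]) auto
  moreover have "mg_iso G H"
    unfolding mg_iso_def
  proof (intro exI conjI)
    show "bij_betw f (verts G) (verts H)" using f unfolding H_def by simp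
    show "bij_betw g (edges G) (edges H)" using g unfolding H_def by simp
    show "\<forall>e\<in>edges G. ends H (g e) = map_prod f f (ends G e) \<or> ends H (g e) = prod.swap (map_prod f f (ends G e))"
    proof
      fix e assume e: "e \<in> edges G"
      have "g e < card (edges G)" using g e bij_betwE by fastforce
      moreover have "inv_into (edges G) g (g e) = e" using g e bij_betw_inv_into_left by fastforce
      ultimately show "ends H (g e) = map_prod f f (ends G e) \<or> ends H (g e) = prod.swap (map_prod f f (ends G e))"
        unfolding H_def h_def by simp
    qed
  qed
  ultimately show ?thesis by blast
qed

definition FQ :: "nat \<Rightarrow> nat \<Rightarrow> (nat, nat) quiver set" where
  "FQ N M = (\<lambda>(V, A, s, t). \<lparr>qverts = V, arrows = A, qsrc = s, qtgt = t\<rparr>) `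
     (Pow {..<N} \<times> Sigma (Pow {..<M}) (\<lambda>A. PiE A (\<lambda>_. {..<N}) \<times> PiE A (\<lambda>_. {..<N})))"

lemma FQ_finite: "finite (FQ N M)"
  unfolding FQ_def by (intro finite_imageI finite_cartesian_product finite_SigmaI finite_PiE) (auto intro: finite_subset)

lemma FQ_iso:
  fixes Q :: "('q, 'a) quiver"
  assumes fV: "finite (qverts Q)" and fA: "finite (arrows Q)"
    and st: "\<forall>a\<in>arrows Q. qsrc Q a \<in> qverts Q \<and> qtgt Q a \<in> qverts Q"
    and "card (qverts Q) \<le> N" "card (arrows Q) \<le> M"
  shows "\<exists>P\<in>FQ N M. quiver_iso Q P"
proof -
  obtain f where f: "bij_betw f (qverts Q) {0..<card (qverts Q)}" using ex_bij_betw_finite_nat[OF fV] by blast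
  obtain g where g: "bij_betw g (arrows Q) {0..<card (arrows Q)}" using ex_bij_betw_finite_nat[OF fA] by blast
  define s where "s = restrict (\<lambda>k. f (qsrc Q (inv_into (arrows Q) g k))) {0..<card (arrows Q)}"
  define t where "t = restrict (\<lambda>k. f (qtgt Q (inv_into (arrows Q) g k))) {0..<card (arrows Q)}"
  define P where "P = \<lparr>qverts = {0..<card (qverts Q)}, arrows = {0..<card (arrows Q)}, qsrc = s, qtgt = t\<rparr>"
  have inv: "inv_into (arrows Q) g k \<in> arrows Q" if "k < card (arrows Q)" for k
    using g that by (metis atLeastLessThan_iff bij_betw_def inv_into_into zero_le)
  have fv: "f x < N" if "x \<in> qverts Q" for x
    using f that bij_betwE assms(4) by fastforce
  have "s \<in> PiE {0..<card (arrows Q)} (\<lambda>_. {..<N})" unfolding s_def using inv fv st by auto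
  moreover have "t \<in> PiE {0..<card (arrows Q)} (\<lambda>_. {..<N})" unfolding t_def using inv fv st by auto
  ultimately have "P \<in> FQ N M" unfolding FQ_def P_def using assms(4,5)
    by (intro image_eqI[where x="({0..<card (qverts Q)}, {0..<card (arrows Q)}, s, t)"]) auto
  moreover have "quiver_iso Q P"
    unfolding quiver_iso_def
  proof (intro exI conjI)
    show "bij_betw f (qverts Q) (qverts P)" using f unfolding P_def by simp
    show "bij_betw g (arrows Q) (arrows P)" using g unfolding P_def by simp
    show "\<forall>a\<in>arrows Q. qsrc P (g a) = f (qsrc Q a) \<and> qtgt P (g a) = f (qtgt Q a)"
    proof
      fix e assume e: "e \<in> arrows Q"
      have "g e < card (arrows Q)" using g e bij_betwE by fastforce
      moreover have "inv_into (arrows Q) g (g e) = e" using g e bij_betw_inv_into_left by fastforce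
      ultimately show "qsrc P (g e) = f (qsrc Q e) \<and> qtgt P (g e) = f (qtgt Q e)"
        unfolding P_def s_def t_def by simp
    qed
  qed
  ultimately show ?thesis by blast
qed

lemma sink_wf:
  assumes "wf_mgraph G"
  shows "finite (qverts (sink_quiver G Or dir)) \<and> finite (arrows (sink_quiver G Or dir)) \<and>
    (\<forall>a\<in>arrows (sink_quiver G Or dir). qsrc (sink_quiver G Or dir) a \<in> qverts (sink_quiver G Or dir) \<and>
        qtgt (sink_quiver G Or dir) a \<in> qverts (sink_quiver G Or dir))"
  using assms unfolding wf_mgraph_def sink_quiver_def by auto

theorem proposition4p15:
  fixes d :: int
  assumes "d \<ge> 2"
  shows "(\<forall>G :: ('v, 'e) mgraph. in_L d G \<longrightarrow>
            int (card (verts G)) \<le> 2 * d - 2 \<and> int (card (edges G)) \<le> 3 * d - 3)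
       \<and> (\<forall>(G :: ('v, 'e) mgraph) Or dir. R_construction d G Or dir \<longrightarrow>
            int (card (qverts (sink_quiver G Or dir))) \<le> 5 * (d - 1) \<and>
            int (card (arrows (sink_quiver G Or dir))) \<le> 6 * (d - 1))
       \<and> (\<exists>F :: (nat, nat) mgraph set. finite F \<and>
            (\<forall>G :: ('v, 'e) mgraph. in_L d G \<longrightarrow> (\<exists>H\<in>F. mg_iso G H)))
       \<and> (\<exists>F :: (nat, nat) quiver set. finite F \<and>
            (\<forall>(G :: ('v, 'e) mgraph) Or dir. R_construction d G Or dir \<longrightarrow>
               (\<exists>P\<in>F. quiver_iso (sink_quiver G Or dir) P)))"
proof (intro conjI)
  show "\<forall>G :: ('v, 'e) mgraph. in_L d G \<longrightarrow>
            int (card (verts G)) \<le> 2 * d - 2 \<and> int (card (edges G)) \<le> 3 * d - 3"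
    using L_bounds by blast
  show "\<forall>(G :: ('v, 'e) mgraph) Or dir. R_construction d G Or dir \<longrightarrow>
            int (card (qverts (sink_quiver G Or dir))) \<le> 5 * (d - 1) \<and>
            int (card (arrows (sink_quiver G Or dir))) \<le> 6 * (d - 1)"
    using R_bounds by blast
  show "\<exists>F :: (nat, nat) mgraph set. finite F \<and>
            (\<forall>G :: ('v, 'e) mgraph. in_L d G \<longrightarrow> (\<exists>H\<in>F. mg_iso G H))"
  proof (intro exI[of _ "FG (nat (2*d-2)) (nat (3*d-3))"] conjI allI impI)
    fix G :: "('v, 'e) mgraph" assume L: "in_L d G"
    show "\<exists>H\<in>FG (nat (2*d-2)) (nat (3*d-3)). mg_iso G H"
      using L_bounds[OF L] L unfolding in_L_def
      by (intro FG_iso) auto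
  qed (rule FG_finite)
  show "\<exists>F :: (nat, nat) quiver set. finite F \<and>
            (\<forall>(G :: ('v, 'e) mgraph) Or dir. R_construction d G Or dir \<longrightarrow>
               (\<exists>P\<in>F. quiver_iso (sink_quiver G Or dir) P))"
  proof (intro exI[of _ "FQ (nat (5*(d-1))) (nat (6*(d-1)))"] conjI allI impI)
    fix G :: "('v, 'e) mgraph" and Or dir assume R: "R_construction d G Or dir"
    have w: "wf_mgraph G" using R unfolding R_construction_def in_L_def by auto
    show "\<exists>P\<in>FQ (nat (5*(d-1))) (nat (6*(d-1))). quiver_iso (sink_quiver G Or dir) P"
      using R_bounds[OF R] sink_wf[OF w, of Or dir]
      by (intro FQ_iso) auto
  qed (rule FQ_finite)
qed

end
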